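(* Let $G=(V,E)$ and $H=(U,F)$ be finite simple graphs. If $G$ and $H$ are isomorphic, then the uniqueness tree algorithm (described in the context) applied to $G$ and $H$ outputs "$G\cong H$".
   Context: A simple graph is a finite, unweighted, undirected graph with no loops or multiple edges. $G\cong H$ means there is a bijection $f:V\to U$ such that for all $u,v\in V$, $f(u)f(v)\in F$ if and only if $uv\in E$. Let $n$ denote the number of vertices. The uniqueness tree algorithm consists of two stages. Tree generation: for each graph and each vertex $v$ of it, build a rooted tree $T(v)$ whose nodes are labelled by vertices of the graph, level by level. Level $0$ consists of the root, labelled $v$. A node on the current level is unique if its label occurs exactly once among the labels on that level. Each non-unique node becomes a leaf; each unique node labelled $u$ receives one child labelled $w$ for each neighbour $w$ of $u$ in the graph; these children form the next level. This is repeated while some node on the current level is unique and the height of $T(v)$ is less than $n$. Tree comparison: initially no vertex is mapped. For each unmapped $v\in V$ and, in turn, each unmapped $u\in U$, declare $v$ and $u$ equivalent unless one of the following holds: the heights of $T(v)$ and $T(u)$ differ; for some level, the numbers of nodes on that level of $T(v)$ and $T(u)$ differ; for some level and some $i\in\{1,\dots,n-1\}$, the number of nodes on that level having exactly $i$ children differs between $T(v)$ and $T(u)$. If $v$ and $u$ are equivalent, mark both as mapped. At the end, output "$G\cong H$" if all vertices of $V$ and $U$ have been mapped, and "$G\not\cong H$" otherwise. *)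

theory Defs
  imports Main "HOL-Library.Multiset"
begin

definition simple_graph :: "'a set \<Rightarrow> ('a \<Rightarrow> 'a \<Rightarrow> bool) \<Rightarrow> bool" where
  "simple_graph V E \<longleftrightarrow> finite V \<and> (\<forall>u w. E u w \<longrightarrow> u \<in> V \<and> w \<in> V)
     \<and> (\<forall>u w. E u w \<longrightarrow> E w u) \<and> (\<forall>u. \<not> E u u)"

definition graph_iso :: "'a set \<Rightarrow> ('a \<Rightarrow> 'a \<Rightarrow> bool) \<Rightarrow> 'b set \<Rightarrow> ('b \<Rightarrow> 'b \<Rightarrow> bool) \<Rightarrow> bool" where
  "graph_iso V E U F \<longleftrightarrow> (\<exists>f. bij_betw f V U \<and> (\<forall>u\<in>V. \<forall>w\<in>V. F (f u) (f w) \<longleftrightarrow> E u w))"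

text \<open>Levels of the uniqueness tree T(v), as multisets of labels.  A node is unique
  iff its label has multiplicity 1 on its level; unique nodes labelled u get one child
  per neighbour of u.\<close>
fun ut_level :: "'a set \<Rightarrow> ('a \<Rightarrow> 'a \<Rightarrow> bool) \<Rightarrow> 'a \<Rightarrow> nat \<Rightarrow> 'a multiset" where
  "ut_level V E v 0 = {#v#}"
| "ut_level V E v (Suc k) =
     (\<Sum>u \<in> {u. count (ut_level V E v k) u = 1}. mset_set {w \<in> V. E u w})"

definition has_unique :: "'a multiset \<Rightarrow> bool" where
  "has_unique M \<longleftrightarrow> (\<exists>u. count M u = 1)"

text \<open>Index of the last generated level: generation stops at level k when no node
  of level k is unique or k has reached n.\<close>
definition ut_stop :: "'a set \<Rightarrow> ('a \<Rightarrow> 'a \<Rightarrow> bool) \<Rightarrow> 'a \<Rightarrow> nat" where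
  "ut_stop V E v = (LEAST k. card V \<le> k \<or> \<not> has_unique (ut_level V E v k))"

definition ut_height :: "'a set \<Rightarrow> ('a \<Rightarrow> 'a \<Rightarrow> bool) \<Rightarrow> 'a \<Rightarrow> nat" where
  "ut_height V E v = (if ut_level V E v (ut_stop V E v) = {#} then ut_stop V E v - 1
                      else ut_stop V E v)"

definition ut_size :: "'a set \<Rightarrow> ('a \<Rightarrow> 'a \<Rightarrow> bool) \<Rightarrow> 'a \<Rightarrow> nat \<Rightarrow> nat" where
  "ut_size V E v k = size (ut_level V E v k)"

text \<open>Number of nodes on level k having exactly i children (used for i \<ge> 1).
  Nodes on the last generated level, and non-unique nodes, are leaves.\<close>
definition ut_children :: "'a set \<Rightarrow> ('a \<Rightarrow> 'a \<Rightarrow> bool) \<Rightarrow> 'a \<Rightarrow> nat \<Rightarrow> nat \<Rightarrow> nat" where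
  "ut_children V E v k i =
     (if k < ut_stop V E v
      then card {u. count (ut_level V E v k) u = 1 \<and> card {w \<in> V. E u w} = i}
      else 0)"

definition ut_equiv :: "nat \<Rightarrow> 'a set \<Rightarrow> ('a \<Rightarrow> 'a \<Rightarrow> bool) \<Rightarrow> 'b set \<Rightarrow> ('b \<Rightarrow> 'b \<Rightarrow> bool)
     \<Rightarrow> 'a \<Rightarrow> 'b \<Rightarrow> bool" where
  "ut_equiv n V E U F v u \<longleftrightarrow>
     ut_height V E v = ut_height U F u
     \<and> (\<forall>k \<le> ut_height V E v. ut_size V E v k = ut_size U F u k)
     \<and> (\<forall>k \<le> ut_height V E v. \<forall>i \<in> {1..n-1}. ut_children V E v k i = ut_children U F u k i)"

definition ut_compare :: "('a \<Rightarrow> 'b \<Rightarrow> bool) \<Rightarrow> 'a list \<Rightarrow> 'b list \<Rightarrow> 'a set \<times> 'b set" where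
  "ut_compare eq vs us =
     foldl (\<lambda>(MV, MU) v. if v \<in> MV then (MV, MU) else
              (case find (\<lambda>u. u \<notin> MU \<and> eq v u) us of
                 None \<Rightarrow> (MV, MU)
               | Some u \<Rightarrow> (insert v MV, insert u MU))) ({}, {}) vs"

definition ut_outputs_iso :: "'a set \<Rightarrow> ('a \<Rightarrow> 'a \<Rightarrow> bool) \<Rightarrow> 'b set \<Rightarrow> ('b \<Rightarrow> 'b \<Rightarrow> bool)
     \<Rightarrow> 'a list \<Rightarrow> 'b list \<Rightarrow> bool" where
  "ut_outputs_iso V E U F vs us \<longleftrightarrow>
     ut_compare (ut_equiv (card V) V E U F) vs us = (V, U)"

end

theory Submission
  imports Defs
begin

lemma image_mset_sum_gen: "image_mset f (sum g S) = (\<Sum>x\<in>S. image_mset f (g x))"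
  by (induction S rule: infinite_finite_induct) auto

lemma level_subset:
  assumes "simple_graph V E" "v \<in> V"
  shows "set_mset (ut_level V E v k) \<subseteq> V"
proof (induction k)
  case 0 then show ?case using assms by simp
next
  case (Suc k)
  show ?case
  proof
    fix x assume "x \<in># ut_level V E v (Suc k)"
    hence "count (ut_level V E v (Suc k)) x > 0" by simp
    hence "(\<Sum>u\<in>{u. count (ut_level V E v k) u = 1}. count (mset_set {w \<in> V. E u w}) x) > 0"
      by (simp add: count_sum)
    hence "\<exists>u. count (mset_set {w \<in> V. E u w}) x > 0"
    proof (rule contrapos_pp)
      assume "\<not> (\<exists>u. count (mset_set {w \<in> V. E u w}) x > 0)"
      thus "\<not> (\<Sum>u\<in>{u. count (ut_level V E v k) u = 1}. count (mset_set {w \<in> V. E u w}) x) > 0"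
      proof -
        have "(\<Sum>u\<in>{u. count (ut_level V E v k) u = 1}. count (mset_set {w \<in> V. E u w}) x) = 0"
          by (rule sum.neutral) (use \<open>\<not> (\<exists>u. count (mset_set {w \<in> V. E u w}) x > 0)\<close> in \<open>auto simp: count_eq_zero_iff\<close>)
        thus ?thesis by linarith
      qed
    qed
    then obtain u where "count (mset_set {w \<in> V. E u w}) x > 0" by blast
    hence "x \<in># mset_set {w \<in> V. E u w}" by simp
    then show "x \<in> V"
      by (cases "finite {w \<in> V. E u w}") auto
  qed
qed

lemma count_img:
  assumes "inj_on f V" "set_mset M \<subseteq> V" "x \<in> V"
  shows "count (image_mset f M) (f x) = count M x"
proof -
  have "f -` {f x} \<inter> set_mset M = {x} \<inter> set_mset M"
    using assms by (auto simp: inj_on_def)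
  hence "count (image_mset f M) (f x) = sum (count M) ({x} \<inter> set_mset M)"
    by (simp only: count_image_mset)
  moreover have "sum (count M) ({x} \<inter> set_mset M) = count M x"
    by (cases "x \<in># M") (simp_all add: count_eq_zero_iff)
  ultimately show ?thesis by linarith
qed

lemma uniq_img:
  assumes "inj_on f V" "set_mset M \<subseteq> V"
  shows "{u. count (image_mset f M) u = 1 \<and> P u} = f ` {u. count M u = 1 \<and> P (f u)}"
proof
  show "{u. count (image_mset f M) u = 1 \<and> P u} \<subseteq> f ` {u. count M u = 1 \<and> P (f u)}"
  proof
    fix y assume y: "y \<in> {u. count (image_mset f M) u = 1 \<and> P u}"
    hence "count (image_mset f M) y \<noteq> 0" by simp
    hence "y \<in># image_mset f M" by (simp add: count_eq_zero_iff)
    then obtain x where x: "x \<in># M" "y = f x" by auto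
    hence "x \<in> V" using assms by auto
    thus "y \<in> f ` {u. count M u = 1 \<and> P (f u)}" using y x count_img[OF assms] by auto
  qed
next
  show "f ` {u. count M u = 1 \<and> P (f u)} \<subseteq> {u. count (image_mset f M) u = 1 \<and> P u}"
  proof
    fix y assume "y \<in> f ` {u. count M u = 1 \<and> P (f u)}"
    then obtain x where x: "count M x = 1" "P (f x)" "y = f x" by auto
    hence "x \<in># M" by (metis not_in_iff zero_neq_one)
    hence "x \<in> V" using assms by auto
    thus "y \<in> {u. count (image_mset f M) u = 1 \<and> P u}" using x count_img[OF assms] by auto
  qed
qed

lemma nbr_img:
  assumes "simple_graph U F" "bij_betw f V U" "\<forall>u\<in>V. \<forall>w\<in>V. F (f u) (f w) \<longleftrightarrow> E u w" "x \<in> V"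
  shows "{w \<in> U. F (f x) w} = f ` {w \<in> V. E x w}"
proof -
  have "f ` V = U" using assms(2) by (simp add: bij_betw_def)
  thus ?thesis using assms(3,4) by auto
qed

lemma level_iso:
  assumes G: "simple_graph V E" and H: "simple_graph U F" and b: "bij_betw f V U"
    and e: "\<forall>u\<in>V. \<forall>w\<in>V. F (f u) (f w) \<longleftrightarrow> E u w" and v: "v \<in> V"
  shows "ut_level U F (f v) k = image_mset f (ut_level V E v k)"
proof (induction k)
  case 0 then show ?case by simp
next
  case (Suc k)
  define M where "M = ut_level V E v k"
  have sub: "set_mset M \<subseteq> V" using level_subset[OF G v] M_def by simp
  have inj: "inj_on f V" using b by (simp add: bij_betw_def)
  have S: "{u. count (image_mset f M) u = 1} = f ` {u. count M u = 1}"
    using uniq_img[OF inj sub, of "\<lambda>_. True"] by simp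
  have Ssub: "{u. count M u = 1} \<subseteq> V"
  proof
    fix u assume "u \<in> {u. count M u = 1}"
    hence "count M u \<noteq> 0" by simp
    hence "u \<in># M" by (simp add: count_eq_zero_iff)
    thus "u \<in> V" using sub by blast
  qed
  have injS: "inj_on f {u. count M u = 1}" using inj_on_subset[OF inj Ssub] .
  have "ut_level U F (f v) (Suc k) = (\<Sum>u\<in>f ` {u. count M u = 1}. mset_set {w \<in> U. F u w})"
    unfolding ut_level.simps(2) Suc M_def[symmetric] S ..
  also have "\<dots> = (\<Sum>x\<in>{u. count M u = 1}. mset_set {w \<in> U. F (f x) w})"
    using sum.reindex[OF injS] by simp
  also have "\<dots> = (\<Sum>x\<in>{u. count M u = 1}. image_mset f (mset_set {w \<in> V. E x w}))"
  proof (rule sum.cong[OF refl])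
    fix x assume "x \<in> {u. count M u = 1}"
    hence xV: "x \<in> V" using Ssub by auto
    have "inj_on f {w \<in> V. E x w}" using inj_on_subset[OF inj] by auto
    thus "mset_set {w \<in> U. F (f x) w} = image_mset f (mset_set {w \<in> V. E x w})"
      using nbr_img[OF H b e xV] image_mset_mset_set by metis
  qed
  also have "\<dots> = image_mset f (ut_level V E v (Suc k))"
    by (simp add: M_def image_mset_sum_gen)
  finally show ?case .
qed

definition sig :: "'a set \<Rightarrow> ('a \<Rightarrow> 'a \<Rightarrow> bool) \<Rightarrow> nat \<Rightarrow> 'a \<Rightarrow> nat \<times> nat list \<times> nat list list" where
  "sig V E n v = (ut_height V E v, map (ut_size V E v) [0..<Suc (ut_height V E v)],
     map (\<lambda>k. map (\<lambda>i. ut_children V E v k i) [1..<n]) [0..<Suc (ut_height V E v)])"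

lemma equiv_sig: "ut_equiv n V E U F v u \<longleftrightarrow> sig V E n v = sig U F n u"
proof -
  have s: "set [1..<n] = {1..n-1}" by (cases n) auto
  show ?thesis
    unfolding ut_equiv_def sig_def
    by (auto simp: map_eq_conv s less_Suc_eq_le simp del: upt_Suc)
qed

lemma sig_iso:
  assumes G: "simple_graph V E" and H: "simple_graph U F" and b: "bij_betw f V U"
    and e: "\<forall>u\<in>V. \<forall>w\<in>V. F (f u) (f w) \<longleftrightarrow> E u w" and v: "v \<in> V"
  shows "sig U F n (f v) = sig V E n v"
proof -
  have inj: "inj_on f V" using b by (simp add: bij_betw_def)
  have cV: "card U = card V" using b by (simp add: bij_betw_same_card)
  note L = level_iso[OF G H b e v]
  have hu: "has_unique (ut_level U F (f v) k) = has_unique (ut_level V E v k)" for k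
  proof -
    have "{u. count (ut_level U F (f v) k) u = 1 \<and> True} = f ` {u. count (ut_level V E v k) u = 1 \<and> True}"
      unfolding L by (rule uniq_img[OF inj level_subset[OF G v]])
    thus ?thesis unfolding has_unique_def by auto
  qed
  have st: "ut_stop U F (f v) = ut_stop V E v"
    unfolding ut_stop_def cV hu ..
  have ht: "ut_height U F (f v) = ut_height V E v"
    unfolding ut_height_def st L by simp
  have sz: "ut_size U F (f v) k = ut_size V E v k" for k
    unfolding ut_size_def L by simp
  have ch: "ut_children U F (f v) k i = ut_children V E v k i" for k i
  proof -
    have sub: "set_mset (ut_level V E v k) \<subseteq> V" by (rule level_subset[OF G v])
    have eq: "{u. count (ut_level U F (f v) k) u = 1 \<and> card {w \<in> U. F u w} = i}
        = f ` {u. count (ut_level V E v k) u = 1 \<and> card {w \<in> U. F (f u) w} = i}"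
      unfolding L by (rule uniq_img[OF inj sub])
    have Ssub: "{u. count (ut_level V E v k) u = 1 \<and> card {w \<in> U. F (f u) w} = i} \<subseteq> V"
      proof
      fix u assume "u \<in> {u. count (ut_level V E v k) u = 1 \<and> card {w \<in> U. F (f u) w} = i}"
      hence "count (ut_level V E v k) u \<noteq> 0" by simp
      hence "u \<in># ut_level V E v k" by (simp add: count_eq_zero_iff)
      thus "u \<in> V" using sub by blast
    qed
    have c2: "{u. count (ut_level V E v k) u = 1 \<and> card {w \<in> U. F (f u) w} = i}
        = {u. count (ut_level V E v k) u = 1 \<and> card {w \<in> V. E u w} = i}"
    proof -
      have "x \<in> V \<Longrightarrow> card {w \<in> U. F (f x) w} = card {w \<in> V. E x w}" for x
      proof -
        assume xV: "x \<in> V"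
        have "inj_on f {w \<in> V. E x w}" using inj_on_subset[OF inj] by auto
        thus ?thesis using nbr_img[OF H b e xV] card_image by simp
      qed
      hence "count (ut_level V E v k) x = 1 \<Longrightarrow> card {w \<in> U. F (f x) w} = card {w \<in> V. E x w}" for x
      proof -
        assume c: "count (ut_level V E v k) x = 1"
        hence "count (ut_level V E v k) x \<noteq> 0" by simp
        hence "x \<in># ut_level V E v k" by (simp add: count_eq_zero_iff)
        hence "x \<in> V" using sub by blast
        thus ?thesis using \<open>\<And>x. x \<in> V \<Longrightarrow> card {w \<in> U. F (f x) w} = card {w \<in> V. E x w}\<close> by blast
      qed
      thus ?thesis by (intro Collect_cong) metis
    qed
    have "card {u. count (ut_level U F (f v) k) u = 1 \<and> card {w \<in> U. F u w} = i}
        = card {u. count (ut_level V E v k) u = 1 \<and> card {w \<in> V. E u w} = i}"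
      unfolding eq using card_image[OF inj_on_subset[OF inj Ssub]] c2 by simp
    thus ?thesis unfolding ut_children_def st by simp
  qed
  show ?thesis unfolding sig_def ht sz ch ..
qed

lemma greedy:
  assumes b: "bij_betw f V U" and hg: "\<forall>v\<in>V. h (f v) = g v"
    and dv: "distinct vs" and sv: "set vs = V" and su: "set us = U"
  shows "ut_compare (\<lambda>v u. g v = h u) vs us = (V, U)"
proof -
  let ?step = "\<lambda>(MV, MU) v. if v \<in> MV then (MV, MU) else
              (case find (\<lambda>u. u \<notin> MU \<and> g v = h u) us of
                 None \<Rightarrow> (MV, MU)
               | Some u \<Rightarrow> (insert v MV, insert u MU))"
  have fin: "finite V" using sv by auto
  have finU: "finite U" using su by auto
  have cls: "card {x\<in>V. g x = s} = card {u\<in>U. h u = s}" for s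
  proof -
    have "f ` {x\<in>V. g x = s} = {u\<in>U. h u = s}"
      using b hg by (auto simp: bij_betw_def)
    moreover have "inj_on f {x\<in>V. g x = s}" using b by (auto simp: bij_betw_def inj_on_def)
    ultimately show ?thesis by (metis card_image)
  qed
  have inv: "distinct xs \<Longrightarrow> set xs \<subseteq> V \<Longrightarrow>
     fst (foldl ?step ({}, {}) xs) = set xs \<and> snd (foldl ?step ({}, {}) xs) \<subseteq> U \<and>
     (\<forall>s. card {x \<in> fst (foldl ?step ({}, {}) xs). g x = s} = card {u \<in> snd (foldl ?step ({}, {}) xs). h u = s})"
    for xs
  proof (induction xs rule: rev_induct)
    case Nil then show ?case by simp
  next
    case (snoc v xs)
    obtain MV MU where st: "foldl ?step ({}, {}) xs = (MV, MU)" by (rule prod.exhaust)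
    from snoc st have MV: "MV = set xs" and MU: "MU \<subseteq> U"
      and C: "\<And>s. card {x \<in> MV. g x = s} = card {u \<in> MU. h u = s}" by auto
    have vn: "v \<notin> MV" using snoc MV by auto
    have vV: "v \<in> V" using snoc by auto
    have MVV: "MV \<subseteq> V" using snoc MV by auto
    have "{x \<in> MV. g x = g v} \<subset> {x\<in>V. g x = g v}" using vn vV MVV by auto
    hence "card {x \<in> MV. g x = g v} < card {x\<in>V. g x = g v}" using fin by (simp add: psubset_card_mono)
    hence "card {u \<in> MU. h u = g v} < card {u\<in>U. h u = g v}" using C cls by simp
    have "\<not> {u\<in>U. h u = g v} \<subseteq> {u \<in> MU. h u = g v}"
    proof
      assume a: "{u\<in>U. h u = g v} \<subseteq> {u \<in> MU. h u = g v}"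
      have "finite MU" using MU finU by (rule finite_subset)
      hence "finite {u \<in> MU. h u = g v}" by auto
      hence "card {u\<in>U. h u = g v} \<le> card {u \<in> MU. h u = g v}" using a by (rule card_mono)
      thus False using \<open>card {u \<in> MU. h u = g v} < card {u\<in>U. h u = g v}\<close> by simp
    qed
    then obtain u0 where u0: "u0 \<in> U" "h u0 = g v" "u0 \<notin> MU" by auto
    hence "find (\<lambda>u. u \<notin> MU \<and> g v = h u) us \<noteq> None" using su by (auto simp: find_None_iff)
    then obtain u where fu: "find (\<lambda>u. u \<notin> MU \<and> g v = h u) us = Some u" by auto
    hence u: "u \<in> U" "u \<notin> MU" "g v = h u" using su by (auto simp: find_Some_iff)
    have res: "foldl ?step ({}, {}) (xs @ [v]) = (insert v MV, insert u MU)"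
      using st vn fu by simp
    have C2: "card {x \<in> insert v MV. g x = s} = card {w \<in> insert u MU. h w = s}" for s
    proof (cases "s = g v")
      case True
      have fMV: "finite MV" using MVV fin finite_subset by auto
      have fMU: "finite MU" using MU finU finite_subset by auto
      have "{x \<in> insert v MV. g x = s} = insert v {x \<in> MV. g x = s}" using True by auto
      moreover have "{w \<in> insert u MU. h w = s} = insert u {w \<in> MU. h w = s}" using True u by auto
      ultimately show ?thesis using fMV fMU vn u C by simp
    next
      case False
      have "{x \<in> insert v MV. g x = s} = {x \<in> MV. g x = s}" using False by auto
      moreover have "{w \<in> insert u MU. h w = s} = {w \<in> MU. h w = s}" using False u by auto
      ultimately show ?thesis using C by simp
    qed
    show ?case using res MV MU u C2 by simp
  qed
  obtain MV MU where st: "foldl ?step ({}, {}) vs = (MV, MU)" by (rule prod.exhaust)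
  from inv[OF dv] sv st have MV: "MV = V" and MU: "MU \<subseteq> U"
    and C: "\<And>s. card {x \<in> MV. g x = s} = card {u \<in> MU. h u = s}" by auto
  have "U \<subseteq> MU"
  proof
    fix u assume uU: "u \<in> U"
    have "card {w \<in> MU. h w = h u} = card {w\<in>U. h w = h u}" using C cls MV by simp
    moreover have "{w \<in> MU. h w = h u} \<subseteq> {w\<in>U. h w = h u}" using MU by auto
    ultimately have "{w \<in> MU. h w = h u} = {w\<in>U. h w = h u}"
      using finU by (intro card_subset_eq) auto
    thus "u \<in> MU" using uU by blast
  qed
  hence "MU = U" using MU by auto
  thus ?thesis using st MV unfolding ut_compare_def by simp
qed

theorem theorem2:
  fixes V :: "'a set" and E :: "'a \<Rightarrow> 'a \<Rightarrow> bool"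
    and U :: "'b set" and F :: "'b \<Rightarrow> 'b \<Rightarrow> bool"
    and vs :: "'a list" and us :: "'b list"
  assumes "simple_graph V E" and "simple_graph U F"
    and "graph_iso V E U F"
    and "distinct vs" and "set vs = V"
    and "distinct us" and "set us = U"
  shows "ut_outputs_iso V E U F vs us"
proof -
  obtain f where b: "bij_betw f V U" and e: "\<forall>u\<in>V. \<forall>w\<in>V. F (f u) (f w) \<longleftrightarrow> E u w"
    using assms(3) unfolding graph_iso_def by blast
  have eq: "ut_equiv (card V) V E U F = (\<lambda>v u. sig V E (card V) v = sig U F (card V) u)"
    by (intro ext) (simp add: equiv_sig)
  have "ut_compare (\<lambda>v u. sig V E (card V) v = sig U F (card V) u) vs us = (V, U)"
    by (rule greedy[OF b _ assms(4,5,7)]) (simp add: sig_iso[OF assms(1,2) b e])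
  thus ?thesis unfolding ut_outputs_iso_def eq .
qed

end
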